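(* If $g\in G$ satisfies $g(x)=x$, then $g=1$. Consequently the map $G\to G(x)$, $g\mapsto g(x)$, is a bijection.
   Context: $\mathbb F$ is a field of characteristic zero and $\mathfrak{sl}_2$ is the Lie algebra of $2\times2$ trace-zero matrices over $\mathbb F$. The equitable basis is $x=\begin{pmatrix}1&0\\0&-1\end{pmatrix}$, $y=\begin{pmatrix}-1&2\\0&1\end{pmatrix}$, $z=\begin{pmatrix}-1&0\\-2&1\end{pmatrix}$. Let $x^*=\begin{pmatrix}1&-1\\1&-1\end{pmatrix}$, $y^*=\begin{pmatrix}0&0\\1&0\end{pmatrix}$, $z^*=\begin{pmatrix}0&-1\\0&0\end{pmatrix}$ (these are nilpotent). $G$ is the subgroup of $\mathrm{Aut}_{\mathbb F}(\mathfrak{sl}_2)$ generated by $\exp(\mathrm{ad}\,x^* )$, $\exp(\mathrm{ad}\,y^* )$ and $\exp(\mathrm{ad}\,z^* )$. $G(x)$ denotes the orbit $\{g(x): g\in G\}$. *)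

theory Defs
  imports "HOL-Analysis.Analysis"
begin

text \<open>2x2 matrices over a field 'a are 'a^2^2; row index i, column index j,
  with the two indices of the numeral type 2 being 1 and 2.\<close>

definition mat2 :: "'a \<Rightarrow> 'a \<Rightarrow> 'a \<Rightarrow> 'a \<Rightarrow> 'a^2^2" where
  "mat2 a b c d = (\<chi> i j. if i = 1 then (if j = 1 then a else b) else (if j = 1 then c else d))"

definition sl2 :: "(('a::field)^2^2) set" where
  "sl2 = {A. trace A = 0}"

definition mat_scale :: "'a::times \<Rightarrow> 'a^2^2 \<Rightarrow> 'a^2^2" where
  "mat_scale c A = (\<chi> i j. c * A$i$j)"

definition ad :: "('a::field)^2^2 \<Rightarrow> 'a^2^2 \<Rightarrow> 'a^2^2" where
  "ad n A = n ** A - A ** n"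

text \<open>Exponential of a nilpotent linear endomorphism f of sl2:
  sum of f^k/k! for k below the nilpotency index of f on sl2,
  taken as a map on sl2 (extensional, undefined outside sl2).\<close>
definition nil_index :: "(('a::field)^2^2 \<Rightarrow> 'a^2^2) \<Rightarrow> nat" where
  "nil_index f = (LEAST m. \<forall>A\<in>sl2. (f ^^ m) A = 0)"

definition exp_nil :: "(('a::field_char_0)^2^2 \<Rightarrow> 'a^2^2) \<Rightarrow> ('a^2^2 \<Rightarrow> 'a^2^2)" where
  "exp_nil f = restrict (\<lambda>A. \<Sum>k<nil_index f. mat_scale (1 / of_nat (fact k)) ((f ^^ k) A)) sl2"

definition eq_x :: "('a::field)^2^2" where "eq_x = mat2 1 0 0 (-1)"
definition xs :: "('a::field)^2^2" where "xs = mat2 1 (-1) 1 (-1)"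
definition ys :: "('a::field)^2^2" where "ys = mat2 0 0 1 0"
definition zs :: "('a::field)^2^2" where "zs = mat2 0 (-1) 0 0"

definition gens :: "(('a::field_char_0)^2^2 \<Rightarrow> 'a^2^2) set" where
  "gens = {exp_nil (ad xs), exp_nil (ad ys), exp_nil (ad zs)}"

text \<open>The subgroup G of Aut(sl2) generated by the three exponentials:
  the smallest set of maps on sl2 containing the identity of sl2 and closed under
  composition with the generators and with their inverses (as maps sl2 -> sl2).\<close>
inductive_set G :: "(('a::field_char_0)^2^2 \<Rightarrow> 'a^2^2) set" where
  G_id: "restrict id sl2 \<in> G"
| G_gen: "g \<in> G \<Longrightarrow> s \<in> gens \<Longrightarrow> compose sl2 s g \<in> G"
| G_inv: "g \<in> G \<Longrightarrow> s \<in> gens \<Longrightarrow> compose sl2 (restrict (inv_into sl2 s) sl2) g \<in> G"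

definition orbit_x :: "(('a::field_char_0)^2^2) set" where
  "orbit_x = (\<lambda>g. g eq_x) ` G"

end

theory Submission
  imports Defs
begin

lemma two_ne: "(1::2) \<noteq> 2" by simp

lemma mat2_entries:
  "mat2 a b c d $ 1 $ 1 = a" "mat2 a b c d $ 1 $ 2 = b"
  "mat2 a b c d $ 2 $ 1 = c" "mat2 a b c d $ 2 $ 2 = d"
  by (simp_all add: mat2_def)

lemma mat2_cases: "(A::'a^2^2) = mat2 (A$1$1) (A$1$2) (A$2$1) (A$2$2)"
  unfolding mat2_def vec_eq_iff forall_2 by simp

lemma mat2_eq: "mat2 a b c d = mat2 a' b' c' d' \<longleftrightarrow> a = a' \<and> b = b' \<and> c = c' \<and> d = d'"
  unfolding vec_eq_iff forall_2 mat2_def by auto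

lemma mat2_mult: "mat2 a b c d ** mat2 e f g h =
   mat2 (a*e+b*g) (a*f+b*h) (c*e+d*g) (c*f+(d::'a::semiring_1)*h)"
  unfolding matrix_matrix_mult_def vec_eq_iff forall_2
  by (simp add: sum_2 mat2_def)

lemma mat2_add: "mat2 a b c d + mat2 e f g h = mat2 (a+e) (b+f) (c+g) (d+(h::'a::plus))"
  unfolding vec_eq_iff forall_2 mat2_def by simp

lemma mat2_diff: "mat2 a b c d - mat2 e f g h = mat2 (a-e) (b-f) (c-g) (d-(h::'a::minus))"
  unfolding vec_eq_iff forall_2 mat2_def by simp

lemma mat2_scale: "mat_scale k (mat2 a b c d) = mat2 (k*a) (k*b) (k*c) (k*(d::'a::times))"
  unfolding vec_eq_iff forall_2 mat2_def mat_scale_def by simp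

lemma mat2_zero: "(0::'a::zero^2^2) = mat2 0 0 0 0"
  unfolding vec_eq_iff forall_2 mat2_def by simp

lemma trace_mat2: "trace (mat2 a b c (d::'a::semiring_1)) = a + d"
  unfolding trace_def by (simp add: sum_2 mat2_entries)

definition M :: "int \<Rightarrow> int \<Rightarrow> int \<Rightarrow> int \<Rightarrow> ('a::field_char_0)^2^2" where
  "M a b c d = mat2 (of_int a) (of_int b) (of_int c) (of_int d)"

definition Ad :: "int \<Rightarrow> int \<Rightarrow> int \<Rightarrow> int \<Rightarrow> ('a::field_char_0)^2^2 \<Rightarrow> 'a^2^2" where
  "Ad a b c d A = M a b c d ** A ** M d (-b) (-c) a"

lemma M_mult: "M a b c d ** M e f g h = M (a*e+b*g) (a*f+b*h) (c*e+d*g) (c*f+d*h)"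
  by (simp add: M_def mat2_mult)

lemma M_one: "M 1 0 0 1 = mat 1"
  unfolding M_def mat2_def vec_eq_iff forall_2 mat_def by simp

lemma Ad_comp: "Ad a b c d (Ad e f g h A) = Ad (a*e+b*g) (a*f+b*h) (c*e+d*g) (c*f+d*h) A"
proof -
  have "Ad a b c d (Ad e f g h A) = (M a b c d ** M e f g h) ** A ** (M h (-f) (-g) e ** M d (-b) (-c) a)"
    unfolding Ad_def by (simp add: matrix_mul_assoc)
  also have "\<dots> = Ad (a*e+b*g) (a*f+b*h) (c*e+d*g) (c*f+d*h) A"
    unfolding Ad_def M_mult by (simp add: algebra_simps)
  finally show ?thesis .
qed

lemma Ad_one: "Ad 1 0 0 1 A = A"
  unfolding Ad_def by (simp add: M_one matrix_mul_lid matrix_mul_rid)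

lemma Ad_inv: assumes "a*d-b*c = 1" shows "Ad d (-b) (-c) a (Ad a b c d A) = A"
proof -
  have "Ad d (-b) (-c) a (Ad a b c d A) = Ad (d*a+(-b)*c) (d*b+(-b)*d) ((-c)*a+a*c) ((-c)*b+a*d) A"
    by (rule Ad_comp)
  also have "\<dots> = Ad 1 0 0 1 A" using assms by (simp add: algebra_simps)
  finally show ?thesis by (simp add: Ad_one)
qed

lemma Ad_inv2: assumes "a*d-b*c = 1" shows "Ad a b c d (Ad d (-b) (-c) a A) = A"
proof -
  have "d*a-(-b)*(-c) = 1" using assms by (simp add: algebra_simps)
  from Ad_inv[OF this, of A] show ?thesis by simp
qed

lemma Ad_sl2: assumes "A \<in> sl2" "a*d-b*c = 1" shows "Ad a b c d A \<in> sl2"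
proof -
  obtain p q r s where A: "A = mat2 p q r s" using mat2_cases by blast
  have ps: "p + s = 0" using assms(1) by (simp add: sl2_def A trace_mat2)
  have d: "(of_int a * of_int d - of_int b * of_int c :: 'a) = 1"
    using assms(2) by (metis of_int_1 of_int_diff of_int_mult)
  have "trace (Ad a b c d A) = (of_int a * of_int d - of_int b * of_int c) * (p + s)"
    unfolding Ad_def M_def A by (simp add: mat2_mult trace_mat2 algebra_simps)
  then show ?thesis by (simp add: sl2_def ps)
qed

lemma mat_scale_zero: "mat_scale k (0::'a::mult_zero^2^2) = 0"
  unfolding mat_scale_def vec_eq_iff by simp

lemma mat_scale_one: "mat_scale 1 (X::'a::monoid_mult^2^2) = X"
  unfolding mat_scale_def vec_eq_iff by simp

lemma ad_zero: "ad n 0 = 0" by (simp add: ad_def)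

lemma funpow_zero: "(ad n ^^ j) 0 = 0"
  by (induction j) (simp_all add: ad_zero)

lemma exp_nil_ad:
  fixes n :: "('a::field_char_0)^2^2"
  assumes h3: "\<And>A. ad n (ad n (ad n A)) = 0"
    and h: "\<And>A. A + ad n A + mat_scale (1/2) (ad n (ad n A)) = Ad a b c d A"
  shows "exp_nil (ad n) = restrict (Ad a b c d) sl2"
proof -
  let ?f = "ad n"
  have P3: "\<forall>A\<in>sl2. (?f ^^ 3) A = 0" by (simp add: numeral_3_eq_3 h3)
  define m where "m = nil_index ?f"
  have m3: "m \<le> 3" unfolding m_def nil_index_def by (rule Least_le) (rule P3)
  have Pm: "\<forall>A\<in>sl2. (?f ^^ m) A = 0" unfolding m_def nil_index_def by (rule LeastI) (rule P3)
  have vanish: "(?f ^^ k) A = 0" if "A \<in> sl2" "m \<le> k" for k A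
  proof -
    have "k = (k - m) + m" using that by simp
    then have "(?f ^^ k) A = (?f ^^ (k-m)) ((?f ^^ m) A)" by (metis funpow_add o_apply)
    also have "\<dots> = 0" using Pm that by (simp add: funpow_zero)
    finally show ?thesis .
  qed
  have "exp_nil ?f A = Ad a b c d A" if A: "A \<in> sl2" for A
  proof -
    have "(\<Sum>k<m. mat_scale (1 / of_nat (fact k)) ((?f ^^ k) A)) =
          (\<Sum>k<3. mat_scale (1 / of_nat (fact k)) ((?f ^^ k) A))"
      using m3 by (intro sum.mono_neutral_left) (auto simp: vanish[OF A] mat_scale_zero)
    also have "\<dots> = A + ?f A + mat_scale (1/2) (?f (?f A))"
      by (simp add: numeral_3_eq_3 mat_scale_one add.assoc)
    finally show ?thesis using A h unfolding exp_nil_def m_def by simp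
  qed
  then show ?thesis unfolding exp_nil_def by (auto simp: restrict_def)
qed

lemma gen_xs: "exp_nil (ad xs) = restrict (Ad 2 (-1) 1 0) (sl2 :: (('a::field_char_0)^2^2) set)"
proof (rule exp_nil_ad)
  fix A :: "'a^2^2"
  obtain p q r s where A: "A = mat2 p q r s" using mat2_cases by blast
  show "ad xs (ad xs (ad xs A)) = 0"
    unfolding A ad_def xs_def by (simp add: mat2_mult mat2_diff mat2_zero mat2_eq algebra_simps)
  show "A + ad xs A + mat_scale (1/2) (ad xs (ad xs A)) = Ad 2 (-1) 1 0 A"
    unfolding A ad_def xs_def Ad_def M_def
    by (simp add: mat2_mult mat2_diff mat2_add mat2_scale mat2_eq algebra_simps)
qed

lemma gen_ys: "exp_nil (ad ys) = restrict (Ad 1 0 1 1) (sl2 :: (('a::field_char_0)^2^2) set)"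
proof (rule exp_nil_ad)
  fix A :: "'a^2^2"
  obtain p q r s where A: "A = mat2 p q r s" using mat2_cases by blast
  show "ad ys (ad ys (ad ys A)) = 0"
    unfolding A ad_def ys_def by (simp add: mat2_mult mat2_diff mat2_zero mat2_eq algebra_simps)
  show "A + ad ys A + mat_scale (1/2) (ad ys (ad ys A)) = Ad 1 0 1 1 A"
    unfolding A ad_def ys_def Ad_def M_def
    by (simp add: mat2_mult mat2_diff mat2_add mat2_scale mat2_eq algebra_simps)
qed

lemma gen_zs: "exp_nil (ad zs) = restrict (Ad 1 (-1) 0 1) (sl2 :: (('a::field_char_0)^2^2) set)"
proof (rule exp_nil_ad)
  fix A :: "'a^2^2"
  obtain p q r s where A: "A = mat2 p q r s" using mat2_cases by blast
  show "ad zs (ad zs (ad zs A)) = 0"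
    unfolding A ad_def zs_def by (simp add: mat2_mult mat2_diff mat2_zero mat2_eq algebra_simps)
  show "A + ad zs A + mat_scale (1/2) (ad zs (ad zs A)) = Ad 1 (-1) 0 1 A"
    unfolding A ad_def zs_def Ad_def M_def
    by (simp add: mat2_mult mat2_diff mat2_add mat2_scale mat2_eq algebra_simps)
qed

definition good :: "(('a::field_char_0)^2^2 \<Rightarrow> 'a^2^2) \<Rightarrow> bool" where
  "good g \<longleftrightarrow> (\<exists>a b c d. a*d-b*c = 1 \<and> g = restrict (Ad a b c d) sl2)"

lemma good_I: "a*d-b*c = 1 \<Longrightarrow> good (restrict (Ad a b c d) sl2)"
  unfolding good_def by blast

lemma gens_good: "s \<in> gens \<Longrightarrow> good s"
  unfolding gens_def by (auto simp: gen_xs gen_ys gen_zs intro!: good_I)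

lemma inv_good: assumes "a*d-b*c = 1"
  shows "restrict (inv_into sl2 (restrict (Ad a b c d) sl2)) sl2 = restrict (Ad d (-b) (-c) a) sl2"
proof -
  have det2: "d*a-(-b)*(-c) = 1" using assms by (simp add: algebra_simps)
  have inj: "inj_on (restrict (Ad a b c d) sl2) sl2"
    by (rule inj_on_inverseI[where g = "Ad d (-b) (-c) a"]) (simp add: Ad_inv[OF assms])
  have "inv_into sl2 (restrict (Ad a b c d) sl2) y = Ad d (-b) (-c) a y" if "y \<in> sl2" for y
    by (rule inv_into_f_eq[OF inj]) (simp_all add: Ad_sl2[OF that det2] Ad_inv2[OF assms])
  then show ?thesis by (intro restrict_ext) blast
qed

lemma compose_good: assumes "a*d-b*c = 1" "e*h-f*g = 1"
  shows "compose sl2 (restrict (Ad a b c d) sl2) (restrict (Ad e f g h) sl2)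
     = restrict (Ad (a*e+b*g) (a*f+b*h) (c*e+d*g) (c*f+d*h)) sl2"
  unfolding compose_def using Ad_sl2[OF _ assms(2)] by (intro restrict_ext) (auto simp add: Ad_comp)

lemma G_good: "g \<in> G \<Longrightarrow> good g"
proof (induction rule: G.induct)
  case G_id
  have "restrict id sl2 = restrict (Ad 1 0 0 1) (sl2::('a^2^2) set)"
    by (auto simp: restrict_def Ad_one)
  then show ?case unfolding good_def by (intro exI[of _ 1] exI[of _ 0]) simp
next
  case (G_gen g s)
  obtain a b c d where 1: "a*d-b*c = 1" "s = restrict (Ad a b c d) sl2"
    using gens_good[OF \<open>s \<in> gens\<close>] unfolding good_def by blast
  obtain e f gg h where 2: "e*h-f*gg = 1" "g = restrict (Ad e f gg h) sl2"
    using \<open>good g\<close> unfolding good_def by blast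
  have "(a*e+b*gg)*(c*f+d*h) - (a*f+b*h)*(c*e+d*gg) = (a*d-b*c)*(e*h-f*gg)"
    by (simp add: algebra_simps)
  then show ?case unfolding 1(2) 2(2) compose_good[OF 1(1) 2(1)] using 1(1) 2(1) by (intro good_I) simp
next
  case (G_inv g s)
  obtain a b c d where 1: "a*d-b*c = 1" "s = restrict (Ad a b c d) sl2"
    using gens_good[OF \<open>s \<in> gens\<close>] unfolding good_def by blast
  have det1: "d*a-(-b)*(-c) = 1" using 1 by (simp add: algebra_simps)
  obtain e f gg h where 2: "e*h-f*gg = 1" "g = restrict (Ad e f gg h) sl2"
    using \<open>good g\<close> unfolding good_def by blast
  have "(d*e+(-b)*gg)*((-c)*f+a*h) - (d*f+(-b)*h)*((-c)*e+a*gg) = (d*a-(-b)*(-c))*(e*h-f*gg)"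
    by (simp add: algebra_simps)
  then show ?case unfolding 1(2) 2(2) inv_good[OF 1(1)] compose_good[OF det1 2(1)] using det1 2(1) by (intro good_I) simp
qed

lemma eq_x_sl2: "eq_x \<in> sl2"
  by (simp add: sl2_def eq_x_def trace_mat2)

lemma stab:
  assumes det: "a*d-b*c = 1" and fx: "Ad a b c d (eq_x::('a::field_char_0)^2^2) = eq_x"
  shows "Ad a b c d (A::'a^2^2) = A"
proof -
  have "(Ad a b c d eq_x :: 'a^2^2) = mat2 (of_int (a*d+b*c)) (of_int (-2*a*b)) (of_int (2*c*d)) (of_int (-(a*d+b*c)))"
    unfolding Ad_def M_def eq_x_def by (simp add: mat2_mult mat2_eq algebra_simps)
  with fx have "mat2 (of_int (a*d+b*c)) (of_int (-2*a*b)) (of_int (2*c*d)) (of_int (-(a*d+b*c))) = (mat2 1 0 0 (-1) :: 'a^2^2)"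
    by (simp add: eq_x_def)
  then have e: "(of_int (a*d+b*c) :: 'a) = 1" "(of_int (-2*a*b) :: 'a) = 0" "(of_int (2*c*d) :: 'a) = 0"
    unfolding mat2_eq by auto
  have e1: "a*d+b*c = 1" using e(1) of_int_eq_1_iff by blast
  have e2: "a*b = 0" using e(2) of_int_eq_0_iff[where 'a='a, of "-2*a*b"] by simp
  have e3: "c*d = 0" using e(3) of_int_eq_0_iff[where 'a='a, of "2*c*d"] by simp
  have ad1: "a*d = 1" and bc: "b*c = 0" using e1 det by linarith+
  then have a: "(a = 1 \<and> d = 1) \<or> (a = -1 \<and> d = -1)" by (simp add: zmult_eq_1_iff)
  then have "b = 0" "c = 0" using e2 e3 by auto
  obtain p q r s where A: "A = mat2 p q r s" using mat2_cases by blast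
  show ?thesis using a \<open>b = 0\<close> \<open>c = 0\<close>
    unfolding A Ad_def M_def by (auto simp: mat2_mult mat2_eq)
qed

theorem lemma4p1:
  shows "(\<forall>g\<in>(G :: (('a::field_char_0)^2^2 \<Rightarrow> 'a^2^2) set). g eq_x = eq_x \<longrightarrow> g = restrict id sl2)
         \<and> bij_betw (\<lambda>g. g eq_x) (G :: (('a::field_char_0)^2^2 \<Rightarrow> 'a^2^2) set) orbit_x"
proof
  show "\<forall>g\<in>(G :: (('a::field_char_0)^2^2 \<Rightarrow> 'a^2^2) set). g eq_x = eq_x \<longrightarrow> g = restrict id sl2"
  proof (intro ballI impI)
    fix g :: "'a^2^2 \<Rightarrow> 'a^2^2"
    assume "g \<in> G" "g eq_x = eq_x"
    then obtain a b c d where 1: "a*d-b*c = 1" "g = restrict (Ad a b c d) sl2"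
      using G_good unfolding good_def by blast
    have "Ad a b c d eq_x = (eq_x :: 'a^2^2)" using \<open>g eq_x = eq_x\<close> unfolding 1(2) restrict_apply'[OF eq_x_sl2] .
    from stab[OF 1(1) this] show "g = restrict id sl2" unfolding 1(2)
      by (intro restrict_ext) simp
  qed
  have "inj_on (\<lambda>g. g eq_x) (G :: (('a::field_char_0)^2^2 \<Rightarrow> 'a^2^2) set)"
  proof (rule inj_onI)
    fix g1 g2 :: "'a^2^2 \<Rightarrow> 'a^2^2"
    assume "g1 \<in> G" "g2 \<in> G" "g1 eq_x = g2 eq_x"
    obtain a b c d where 1: "a*d-b*c = 1" "g1 = restrict (Ad a b c d) sl2"
      using G_good[OF \<open>g1 \<in> G\<close>] unfolding good_def by blast
    obtain e f gg h where 2: "e*h-f*gg = 1" "g2 = restrict (Ad e f gg h) sl2"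
      using G_good[OF \<open>g2 \<in> G\<close>] unfolding good_def by blast
    have x: "Ad a b c d eq_x = (Ad e f gg h eq_x :: 'a^2^2)"
      using \<open>g1 eq_x = g2 eq_x\<close> unfolding 1(2) 2(2) restrict_apply'[OF eq_x_sl2] .
    define a' b' c' d' where "a' = h*a+(-f)*c" "b' = h*b+(-f)*d" "c' = (-gg)*a+e*c" "d' = (-gg)*b+e*d"
    note dd = this
    have detq: "a'*d'-b'*c' = 1"
    proof -
      have "a'*d'-b'*c' = (e*h-f*gg)*(a*d-b*c)" unfolding dd by (simp add: algebra_simps)
      then show ?thesis using 1 2 by simp
    qed
    have comp: "Ad h (-f) (-gg) e (Ad a b c d B) = (Ad a' b' c' d' B :: 'a^2^2)" for B
      unfolding dd by (rule Ad_comp)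
    have "Ad a' b' c' d' eq_x = (eq_x :: 'a^2^2)"
      using comp[of eq_x, symmetric] x Ad_inv[OF 2(1), of eq_x] by simp
    note q = stab[OF detq this]
    have "Ad a b c d B = (Ad e f gg h B :: 'a^2^2)" for B
    proof -
      have "Ad a b c d B = Ad e f gg h (Ad h (-f) (-gg) e (Ad a b c d B))"
        by (rule Ad_inv2[OF 2(1), symmetric])
      also have "\<dots> = Ad e f gg h B" by (simp add: comp q)
      finally show ?thesis .
    qed
    then show "g1 = g2" unfolding 1(2) 2(2) by (intro restrict_ext) blast
  qed
  then show "bij_betw (\<lambda>g. g eq_x) (G :: (('a::field_char_0)^2^2 \<Rightarrow> 'a^2^2) set) orbit_x"
    unfolding bij_betw_def orbit_x_def by simp
qed

end
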